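(* Assume inhibitory coupling ($\varepsilon_{ij}\le 0$ for all $i,j$ and $\varepsilon<0$); no assumption is made on the connectivity. Then for every ordering $\mathcal O$ and every $\boldsymbol\delta\in\mathbb R^N$, $$\max_i\big|(A(\mathcal O)\boldsymbol\delta)_i\big|\le\max_i|\delta_i|.$$ Consequently, for any sequence of orderings $\mathcal O_1,\mathcal O_2,\dots$, the iterates $\boldsymbol\delta(l)=A(\mathcal O_l)\boldsymbol\delta(l-1)$ satisfy $\|\boldsymbol\delta(l)\|_\infty\le\|\boldsymbol\delta(0)\|_\infty$ for all $l\in\mathbb N$.
   Context: Let $U$ be a twice continuously differentiable, strictly increasing function on an interval $I\subseteq\mathbb R$ containing $(-\infty,1]$. Assume $U'>0$ and $U''<0$ on $I$, $U(0)=0$ and $U(1)=1$. Fix $N\ge 2$ and a delay $\tau\in(0,1)$. For each $i$ fix a nonempty set $\mathrm{Pre}(i)\subseteq\{1,\dots,N\}\setminus\{i\}$ and put $k_i=|\mathrm{Pre}(i)|$. Fix real couplings $\varepsilon_{ij}$ with $\varepsilon_{ij}\neq0$ if and only if $j\in\mathrm{Pre}(i)$, normalized so that $\sum_j\varepsilon_{ij}=\varepsilon$ for every $i$. An ordering $\mathcal O$ is a choice, for each $i$, of an enumeration $j_1(i),\dots,j_{k_i}(i)$ of $\mathrm{Pre}(i)$. For $n\in\{0,\dots,k_i\}$ define $$p_{i,n}=\frac{U'\Big(U^{-1}\big(U(\tau)+\sum_{m=1}^{n}\varepsilon_{ij_m(i)}\big)\Big)}{U'\big(U^{-1}(U(\tau)+\varepsilon)\big)}.$$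 The stability matrix $A(\mathcal O)$ has entries - $A_{ii}=p_{i,0}$; - $A_{ij}=p_{i,n}-p_{i,n-1}$ if $j=j_n(i)$; - $A_{ij}=0$ if $j\notin\mathrm{Pre}(i)\cup\{i\}$. *)

theory Defs
  imports "HOL-Analysis.Analysis"
begin

definition admissible_U ::
  "real set \<Rightarrow> (real \<Rightarrow> real) \<Rightarrow> (real \<Rightarrow> real) \<Rightarrow> (real \<Rightarrow> real) \<Rightarrow> bool" where
  "admissible_U I U Up Upp \<longleftrightarrow>
     is_interval I \<and> {..1} \<subseteq> I \<and>
     (\<forall>x\<in>I. (U has_real_derivative Up x) (at x within I)) \<and>
     (\<forall>x\<in>I. (Up has_real_derivative Upp x) (at x within I)) \<and>
     continuous_on I Upp \<and>
     (\<forall>x\<in>I. Up x > 0) \<and> (\<forall>x\<in>I. Upp x < 0) \<and>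
     U 0 = 0 \<and> U 1 = 1"

definition is_ordering :: "('n \<Rightarrow> 'n set) \<Rightarrow> ('n \<Rightarrow> 'n list) \<Rightarrow> bool" where
  "is_ordering Pre ord \<longleftrightarrow> (\<forall>i. distinct (ord i) \<and> set (ord i) = Pre i)"

text \<open>p_{i,n}; the list is 0-indexed, so j_m(i) = ord i ! (m-1).\<close>
definition pcoef ::
  "real set \<Rightarrow> (real \<Rightarrow> real) \<Rightarrow> (real \<Rightarrow> real) \<Rightarrow> real \<Rightarrow> real \<Rightarrow>
   ('n \<Rightarrow> 'n \<Rightarrow> real) \<Rightarrow> ('n \<Rightarrow> 'n list) \<Rightarrow> 'n \<Rightarrow> nat \<Rightarrow> real" where
  "pcoef I U Up \<tau> \<epsilon> eps ord i n =
     Up (inv_into I U (U \<tau> + (\<Sum>m<n. eps i (ord i ! m))))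
     / Up (inv_into I U (U \<tau> + \<epsilon>))"

definition stab_matrix ::
  "real set \<Rightarrow> (real \<Rightarrow> real) \<Rightarrow> (real \<Rightarrow> real) \<Rightarrow> real \<Rightarrow> real \<Rightarrow>
   ('n::finite \<Rightarrow> 'n set) \<Rightarrow> ('n \<Rightarrow> 'n \<Rightarrow> real) \<Rightarrow> ('n \<Rightarrow> 'n list) \<Rightarrow> real^'n^'n" where
  "stab_matrix I U Up \<tau> \<epsilon> Pre eps ord =
     (\<chi> i j. if j = i then pcoef I U Up \<tau> \<epsilon> eps ord i 0
            else if j \<in> Pre i then
              (let n = (THE n. n < length (ord i) \<and> ord i ! n = j) in
                 pcoef I U Up \<tau> \<epsilon> eps ord i (Suc n) - pcoef I U Up \<tau> \<epsilon> eps ord i n)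
            else 0)"

definition supnorm :: "real^'n::finite \<Rightarrow> real" where
  "supnorm x = Max (range (\<lambda>i. \<bar>x $ i\<bar>))"

end

theory Submission
  imports Defs
begin


lemma mvt_I:
  fixes f f' :: "real \<Rightarrow> real"
  assumes I: "is_interval I" and d: "\<forall>x\<in>I. (f has_real_derivative f' x) (at x within I)"
    and "a\<in>I" "b\<in>I" "a<b"
  shows "\<exists>c\<in>{a<..<b}. f b - f a = f' c * (b - a)"
proof -
  have sub: "{a..b} \<subseteq> I"
  proof
    fix x assume "x \<in> {a..b}"
    then show "x \<in> I" using mem_is_interval_1_I[OF I assms(3,4)] by simp
  qed
  have "\<exists>x\<in>{a<..<b}. f b - f a = (\<lambda>x. (*) (f' x)) x (b - a)"
  proof (rule mvt_simple)
    fix x assume "a \<le> x" "x \<le> b"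
    then have "x \<in> I" using sub by auto
    then show "(f has_derivative (\<lambda>x. (*) (f' x)) x) (at x within {a..b})"
    proof -
      have "(f has_real_derivative f' x) (at x within I)" using d \<open>x \<in> I\<close> by blast
      then have "(f has_derivative (*) (f' x)) (at x within I)"
        by (rule has_field_derivative_imp_has_derivative)
      then show ?thesis using sub by (rule has_derivative_subset)
    qed
  qed fact
  then show ?thesis by auto
qed

lemma smono_I:
  fixes f f' :: "real \<Rightarrow> real"
  assumes I: "is_interval I" and d: "\<forall>x\<in>I. (f has_real_derivative f' x) (at x within I)"
    and pos: "\<forall>x\<in>I. f' x > 0"
    and "a\<in>I" "b\<in>I" "a<b"
  shows "f a < f b"
proof -
  obtain c where c: "c\<in>{a<..<b}" "f b - f a = f' c * (b - a)" using mvt_I[OF I d assms(4-6)] by blast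
  have "c \<in> I" using mem_is_interval_1_I[OF I assms(4,5), of c] c(1) by simp
  then have "f' c * (b - a) > 0" using pos assms(6) by simp
  then show ?thesis using c by simp
qed


theorem mainTheorem5:
  fixes I :: "real set" and U Up Upp :: "real \<Rightarrow> real"
    and \<tau> \<epsilon> :: real
    and Pre :: "'n::finite \<Rightarrow> 'n set" and eps :: "'n \<Rightarrow> 'n \<Rightarrow> real"
  assumes U: "admissible_U I U Up Upp"
    and N: "CARD('n) \<ge> 2"
    and tau: "0 < \<tau>" "\<tau> < 1"
    and Pre: "\<And>i. Pre i \<noteq> {}" "\<And>i. i \<notin> Pre i"
    and eps_supp: "\<And>i j. eps i j \<noteq> 0 \<longleftrightarrow> j \<in> Pre i"
    and eps_sum: "\<And>i. (\<Sum>j\<in>UNIV. eps i j) = \<epsilon>"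
    and inhib: "\<And>i j. eps i j \<le> 0" "\<epsilon> < 0"
  shows "(\<forall>ord (\<delta>::real^'n). is_ordering Pre ord \<longrightarrow>
            supnorm (stab_matrix I U Up \<tau> \<epsilon> Pre eps ord *v \<delta>) \<le> supnorm \<delta>)
      \<and> (\<forall>(Os :: nat \<Rightarrow> 'n \<Rightarrow> 'n list) (\<delta>s :: nat \<Rightarrow> real^'n).
            (\<forall>l. is_ordering Pre (Os l)) \<longrightarrow>
            (\<forall>l. \<delta>s (Suc l) = stab_matrix I U Up \<tau> \<epsilon> Pre eps (Os (Suc l)) *v \<delta>s l) \<longrightarrow>
            (\<forall>l. supnorm (\<delta>s l) \<le> supnorm (\<delta>s 0)))"
proof -
  from U have I: "is_interval I" and sub1: "{..1} \<subseteq> I"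
    and dU: "\<forall>x\<in>I. (U has_real_derivative Up x) (at x within I)"
    and dUp: "\<forall>x\<in>I. (Up has_real_derivative Upp x) (at x within I)"
    and Uppos: "\<forall>x\<in>I. Up x > 0" and Uppneg: "\<forall>x\<in>I. Upp x < 0"
    and U0: "U 0 = 0"
    unfolding admissible_U_def by auto
  have dmUp: "\<forall>x\<in>I. ((\<lambda>x. - Up x) has_real_derivative - Upp x) (at x within I)"
    using dUp by (auto intro: derivative_intros)
  have Umono: "U a < U b" if "a \<in> I" "b \<in> I" "a < b" for a b
    using smono_I[OF I dU Uppos that] .
  have Upanti: "Up b < Up a" if "a \<in> I" "b \<in> I" "a < b" for a b
    using smono_I[OF I dmUp _ that] Uppneg by auto
  have injU: "inj_on U I"
  proof (rule inj_onI)
    fix a b assume ab: "a \<in> I" "b \<in> I" "U a = U b"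
    show "a = b"
    proof (rule ccontr)
      assume "a \<noteq> b"
      then have "a < b \<or> b < a" by auto
      then show False using Umono[of a b] Umono[of b a] ab by auto
    qed
  qed
  have contU: "continuous_on I U"
    unfolding continuous_on_eq_continuous_within using dU DERIV_continuous by blast
  have tauI: "\<tau> \<in> I" "0 \<in> I" using sub1 tau by auto
  have lowb: "U x \<le> Up 0 * x" if xneg: "x < 0" for x
  proof -
    have xI: "x \<in> I" using sub1 that by auto
    obtain c where c: "c\<in>{x<..<0}" "U 0 - U x = Up c * (0 - x)"
      using mvt_I[OF I dU xI tauI(2) xneg] by blast
    have "c \<in> I" using sub1 c(1) by auto
    then have "Up 0 < Up c" using Upanti tauI c(1) by auto
    then have "Up 0 * (0 - x) \<le> Up c * (0 - x)" using xneg by (intro mult_right_mono) auto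
    then show ?thesis using c U0 by simp
  qed
  define g where "g = inv_into I U"
  have gprop: "g y \<in> I \<and> U (g y) = y" if hy: "y \<le> U \<tau>" for y
  proof -
    define x0 where "x0 = min 0 (y / Up 0)"
    have up0: "Up 0 > 0" using Uppos tauI by auto
    have x0: "x0 \<le> 0" unfolding x0_def by simp
    have "U x0 \<le> y"
    proof (cases "y / Up 0 < 0")
      case True
      then have "x0 = y / Up 0" unfolding x0_def by simp
      then show ?thesis using lowb[OF True] up0 by simp
    next
      case False
      then have "x0 = 0" "y \<ge> 0" unfolding x0_def using up0
        by (auto simp: divide_less_0_iff)
      then show ?thesis using U0 by simp
    qed
    moreover have "{x0..\<tau>} \<subseteq> I" using sub1 tau by auto
    then have "continuous_on {x0..\<tau>} U" using contU continuous_on_subset by blast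
    ultimately obtain x where x: "x0 \<le> x" "x \<le> \<tau>" "U x = y"
      using IVT'[of U x0 y \<tau>] hy x0 tau by auto
    have xI: "x \<in> I" using x sub1 tau by auto
    have "g y = x" unfolding g_def using x(3) inv_into_f_f[OF injU xI] by simp
    then show ?thesis using x xI by simp
  qed
  have gmono: "g y1 \<le> g y2" if "y1 \<le> y2" "y2 \<le> U \<tau>" for y1 y2
  proof (rule ccontr)
    assume "\<not> g y1 \<le> g y2"
    then have "g y2 < g y1" by simp
    moreover have "g y1 \<in> I" "U (g y1) = y1" "g y2 \<in> I" "U (g y2) = y2"
      using gprop[of y1] gprop[of y2] that by auto
    ultimately have "y2 < y1" using Umono[of "g y2" "g y1"] by simp
    then show False using that by simp
  qed
  have Upmono: "Up (g y2) \<le> Up (g y1)" if "y1 \<le> y2" "y2 \<le> U \<tau>" for y1 y2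
  proof -
    have le: "g y1 \<le> g y2" using gmono[OF that] .
    have "g y1 \<in> I" "g y2 \<in> I" using gprop[of y1] gprop[of y2] that by auto
    then show ?thesis using le Upanti[of "g y1" "g y2"] by (cases "g y1 = g y2") auto
  qed
  define D where "D = Up (g (U \<tau> + \<epsilon>))"
  have Dpos: "D > 0" unfolding D_def using gprop[of "U \<tau> + \<epsilon>"] inhib Uppos by auto
  have part1: "supnorm (stab_matrix I U Up \<tau> \<epsilon> Pre eps ord *v \<delta>) \<le> supnorm \<delta>"
    if ord: "is_ordering Pre ord" for ord and \<delta> :: "real^'n"
  proof -
    define A where "A = stab_matrix I U Up \<tau> \<epsilon> Pre eps ord"
    define M where "M = supnorm \<delta>"
    have dM: "\<bar>\<delta> $ j\<bar> \<le> M" for j unfolding M_def supnorm_def by (rule Max_ge) auto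
    have M0: "0 \<le> M" using dM[of undefined] by linarith
    have row: "\<bar>(A *v \<delta>) $ i\<bar> \<le> M" for i
    proof -
      define L where "L = ord i"
      define k where "k = length L"
      define S where "S n = (\<Sum>m<n. eps i (L ! m))" for n
      define p where "p n = pcoef I U Up \<tau> \<epsilon> eps ord i n" for n
      define idx where "idx j = (THE n. n < length L \<and> L ! n = j)" for j
      have dist: "distinct L" and setL: "set L = Pre i" using ord unfolding is_ordering_def L_def by auto
      have pdef: "p n = Up (g (U \<tau> + S n)) / D" for n
        unfolding p_def pcoef_def S_def D_def g_def L_def by simp
      have S_le0: "S n \<le> 0" for n unfolding S_def using inhib(1) by (simp add: sum_nonpos)
      have S_ge: "\<epsilon> \<le> S n" if "n \<le> k" for n
      proof -
        define B where "B = (!) L ` {..<n}"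
        have inj: "inj_on ((!) L) {..<n}" using dist that unfolding k_def
          by (intro inj_onI) (auto simp: nth_eq_iff_index_eq)
        have "S n = sum (eps i) B" unfolding S_def B_def using sum.reindex[OF inj, of "eps i"] by simp
        moreover have "(\<Sum>j\<in>UNIV. eps i j) = sum (eps i) B + sum (eps i) (UNIV - B)"
          using sum.subset_diff[of B UNIV "eps i"] by simp
        moreover have "sum (eps i) (UNIV - B) \<le> 0" using inhib(1) by (simp add: sum_nonpos)
        ultimately show ?thesis using eps_sum[of i] by linarith
      qed
      have S_suc: "S (Suc n) \<le> S n" for n unfolding S_def using inhib(1)[of i "L!n"] by simp
      have Sle: "U \<tau> + S n \<le> U \<tau>" for n using S_le0[of n] by simp
      have p0: "0 \<le> p 0" unfolding pdef using gprop[OF Sle[of 0]] Uppos Dpos by (simp add: less_imp_le)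
      have pinc: "p n \<le> p (Suc n)" for n
        unfolding pdef using Upmono[of "U \<tau> + S (Suc n)" "U \<tau> + S n"] S_suc[of n] Sle Dpos
        by (simp add: divide_right_mono)
      have pk: "p k \<le> 1"
      proof -
        have "Up (g (U \<tau> + S k)) \<le> D" unfolding D_def
          using Upmono[of "U \<tau> + \<epsilon>" "U \<tau> + S k"] S_ge[of k] Sle by simp
        then show ?thesis unfolding pdef using Dpos by simp
      qed
      have idxn: "idx (L ! n) = n" if "n < k" for n
        unfolding idx_def using that dist unfolding k_def
        by (intro the_equality) (auto simp: nth_eq_iff_index_eq)
      have Aij: "A $ i $ j = (if j = i then p 0 else if j \<in> Pre i then p (Suc (idx j)) - p (idx j) else 0)" for j
        unfolding A_def stab_matrix_def p_def idx_def L_def by (simp add: Let_def)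
      have Anonneg: "0 \<le> A $ i $ j" for j unfolding Aij using p0 pinc by (auto simp: algebra_simps)
      have PreL: "Pre i = (!) L ` {..<k}" unfolding setL[symmetric] k_def by (auto simp: in_set_conv_nth)
      have injk: "inj_on ((!) L) {..<k}" using dist unfolding k_def
        by (intro inj_onI) (auto simp: nth_eq_iff_index_eq)
      have "(\<Sum>j\<in>UNIV. A $ i $ j) = (\<Sum>j\<in>UNIV. (if j = i then p 0 else 0))
            + (\<Sum>j\<in>UNIV. (if j \<in> Pre i then p (Suc (idx j)) - p (idx j) else 0))"
        unfolding Aij sum.distrib[symmetric] using Pre(2)[of i] by (intro sum.cong) auto
      also have "\<dots> = p 0 + (\<Sum>j\<in>Pre i. p (Suc (idx j)) - p (idx j))"
        by (simp add: sum.inter_restrict[symmetric])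
      also have "(\<Sum>j\<in>Pre i. p (Suc (idx j)) - p (idx j)) = (\<Sum>n<k. p (Suc n) - p n)"
        unfolding PreL using sum.reindex[OF injk, of "\<lambda>j. p (Suc (idx j)) - p (idx j)"] idxn
        by simp
      also have "\<dots> = p k - p 0" by (rule sum_lessThan_telescope)
      finally have rs: "(\<Sum>j\<in>UNIV. A $ i $ j) \<le> 1" using pk by simp
      have "\<bar>(A *v \<delta>) $ i\<bar> = \<bar>\<Sum>j\<in>UNIV. A $ i $ j * \<delta> $ j\<bar>"
        by (simp add: matrix_vector_mult_def)
      also have "\<dots> \<le> (\<Sum>j\<in>UNIV. \<bar>A $ i $ j * \<delta> $ j\<bar>)" by (rule sum_abs)
      also have "\<dots> \<le> (\<Sum>j\<in>UNIV. A $ i $ j * M)"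
        by (intro sum_mono) (simp add: abs_mult Anonneg dM mult_left_mono)
      also have "\<dots> = (\<Sum>j\<in>UNIV. A $ i $ j) * M" by (simp add: sum_distrib_right)
      also have "\<dots> \<le> M" using mult_right_mono[OF rs M0] by simp
      finally show ?thesis .
    qed
    have "supnorm (A *v \<delta>) \<le> M" unfolding supnorm_def[of "A *v \<delta>"]
      using row by (intro Max.boundedI) auto
    then show ?thesis unfolding A_def M_def .
  qed
  show ?thesis
  proof (intro conjI allI impI)
    fix ord and \<delta> :: "real^'n" assume "is_ordering Pre ord"
    then show "supnorm (stab_matrix I U Up \<tau> \<epsilon> Pre eps ord *v \<delta>) \<le> supnorm \<delta>" by (rule part1)
  next
    fix Os :: "nat \<Rightarrow> 'n \<Rightarrow> 'n list" and \<delta>s :: "nat \<Rightarrow> real^'n" and l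
    assume h1: "\<forall>l. is_ordering Pre (Os l)"
      and h2: "\<forall>l. \<delta>s (Suc l) = stab_matrix I U Up \<tau> \<epsilon> Pre eps (Os (Suc l)) *v \<delta>s l"
    show "supnorm (\<delta>s l) \<le> supnorm (\<delta>s 0)"
    proof (induction l)
      case (Suc l)
      have "supnorm (\<delta>s (Suc l)) \<le> supnorm (\<delta>s l)" unfolding h2[rule_format] by (rule part1[OF h1[rule_format]])
      then show ?case using Suc by linarith
    qed simp
  qed
qed

end
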